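(* In the setting described in the context, for every $\theta\in\Theta$ and every POVM $M$, $F^M_\theta\le C_\Upsilon(\theta)$. Moreover, there exists a POVM $M$ (possibly depending on $\theta$) with $F^M_\theta=C_\Upsilon(\theta)$ if and only if $\langle w_j'(\theta)|w_k(\theta)\rangle=0$ for all $j,k$ with $p_j(\theta)>0$ and $p_k(\theta)>0$.
   Context: Let $\Theta\subseteq\mathbb{R}$ be an open interval and $D\ge1$. For $\theta\in\Theta$ let $\Phi_\theta$ be a quantum channel on $D\times D$ complex matrices and $\rho_0=|\psi_0\rangle\langle\psi_0|$ a fixed pure input state. Canonical Kraus operators are $D\times D$ matrices $\Upsilon_1(\theta),\dots,\Upsilon_D(\theta)$, differentiable in $\theta$, with $\sum_k\Upsilon_k^\dagger\Upsilon_k=\mathbb{I}$, $\Phi_\theta(\rho)=\sum_k\Upsilon_k\rho\Upsilon_k^\dagger$, and $\mathrm{tr}\{\Upsilon_k\rho_0\Upsilon_j^\dagger\}=\delta_{jk}p_k(\theta)$. Write $\Upsilon_k(\theta)|\psi_0\rangle=\sqrt{p_k(\theta)}|w_k(\theta)\rangle$ with $\{|w_k(\theta)\rangle\}$ an orthonormal basis of $\mathbb{C}^D$ differentiable in $\theta$; the output is $\rho_\theta=\sum_kp_k|w_k\rangle\langle w_k|$. Each $p_k$ is assumed either identically zero or strictly positive on $\Theta$. Primes denote $d/d\theta$. $C_\Upsilon(\theta)=4\sum_k\mathrm{tr}\{\Upsilon_k'\rho_0\Upsilon_k'^\dagger\}$. A POVM is a finite family $M=\{M_m\}$ of positive semidefinite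 $D\times D$ matrices with $\sum_mM_m=\mathbb{I}$; with $p(m;\theta)=\mathrm{tr}\{\rho_\theta M_m\}$, its Fisher information is $F^M_\theta=\sum_{m:\,p(m;\theta)>0}\frac{1}{p(m;\theta)}\bigl(\frac{dp(m;\theta)}{d\theta}\bigr)^2$. *)

theory Defs
  imports "HOL-Analysis.Analysis"
begin

text \<open>D x D complex matrices are modelled as complex^'n^'n with D = CARD('n).\<close>

definition cinner :: "complex^'n \<Rightarrow> complex^'n \<Rightarrow> complex" where
  "cinner x y = (\<Sum>i\<in>UNIV. cnj (x $ i) * y $ i)"

definition mat_adj :: "complex^'n^'n \<Rightarrow> complex^'n^'n" where
  "mat_adj A = (\<chi> i j. cnj (A $ j $ i))"

definition ket_bra :: "complex^'n \<Rightarrow> complex^'n \<Rightarrow> complex^'n^'n" where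
  "ket_bra x y = (\<chi> i j. x $ i * cnj (y $ j))"

definition hermitian :: "complex^'n^'n \<Rightarrow> bool" where
  "hermitian A \<longleftrightarrow> mat_adj A = A"

definition psd :: "complex^'n^'n \<Rightarrow> bool" where
  "psd A \<longleftrightarrow> hermitian A \<and> (\<forall>x. Im (cinner x (A *v x)) = 0 \<and> Re (cinner x (A *v x)) \<ge> 0)"

definition is_povm :: "nat \<Rightarrow> (nat \<Rightarrow> complex^'n^'n) \<Rightarrow> bool" where
  "is_povm N M \<longleftrightarrow> (\<forall>m<N. psd (M m)) \<and> (\<Sum>m<N. M m) = mat 1"

definition out_state :: "('n \<Rightarrow> complex^'n^'n) \<Rightarrow> complex^'n \<Rightarrow> complex^'n^'n" where
  "out_state Y psi0 = (\<Sum>k\<in>UNIV. Y k ** ket_bra psi0 psi0 ** mat_adj (Y k))"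

definition outcome_prob ::
  "(real \<Rightarrow> 'n \<Rightarrow> complex^'n^'n) \<Rightarrow> complex^'n \<Rightarrow> (nat \<Rightarrow> complex^'n^'n) \<Rightarrow> nat \<Rightarrow> real \<Rightarrow> real" where
  "outcome_prob Y psi0 M m t = Re (trace (out_state (Y t) psi0 ** M m))"

definition fisher_info ::
  "(real \<Rightarrow> 'n \<Rightarrow> complex^'n^'n) \<Rightarrow> complex^'n \<Rightarrow> nat \<Rightarrow> (nat \<Rightarrow> complex^'n^'n) \<Rightarrow> real \<Rightarrow> real" where
  "fisher_info Y psi0 N M \<theta> =
     (\<Sum>m\<in>{m. m < N \<and> outcome_prob Y psi0 M m \<theta> > 0}.
        (deriv (outcome_prob Y psi0 M m) \<theta>)\<^sup>2 / outcome_prob Y psi0 M m \<theta>)"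

text \<open>C_Upsilon(theta) = 4 sum_k tr(Y'_k rho0 Y'_k^dagger), Y' the derivatives at theta.\<close>
definition C_Ups :: "('n \<Rightarrow> complex^'n^'n) \<Rightarrow> complex^'n \<Rightarrow> real" where
  "C_Ups Y' psi0 = Re (4 * (\<Sum>k\<in>UNIV. trace (Y' k ** ket_bra psi0 psi0 ** mat_adj (Y' k))))"

end

theory Submission
  imports Defs
begin

lemma vec_scaleR_conv: "(c::real) *\<^sub>R (x::complex^'n) = complex_of_real c *s x"
  by (vector scaleR_conv_of_real)

lemma Re_cinner: "Re (cinner x y) = (x::complex^'n) \<bullet> y"
  by (simp add: cinner_def inner_vec_def inner_complex_def Re_sum)

lemma cinner_cnj: "cinner x y = cnj (cinner y x)"
  by (simp add: cinner_def mult.commute)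

lemma cinner_add_right: "cinner x (y + z) = cinner x y + cinner x z"
  by (simp add: cinner_def distrib_left sum.distrib)
lemma cinner_add_left: "cinner (x + y) z = cinner x z + cinner y z"
  by (simp add: cinner_def distrib_right sum.distrib)
lemma cinner_diff_right: "cinner x (y - z) = cinner x y - cinner x z"
  by (simp add: cinner_def right_diff_distrib sum_subtractf)
lemma cinner_diff_left: "cinner (x - y) z = cinner x z - cinner y z"
  by (simp add: cinner_def left_diff_distrib sum_subtractf)
lemma cinner_scale_right: "cinner x (c *s y) = c * cinner x y"
  by (simp add: cinner_def sum_distrib_left ac_simps)
lemma cinner_scale_left: "cinner (c *s x) y = cnj c * cinner x y"
  by (simp add: cinner_def sum_distrib_left ac_simps)
lemma cinner_zero_left[simp]: "cinner 0 y = 0" by (simp add: cinner_def)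
lemma cinner_zero_right[simp]: "cinner x 0 = 0" by (simp add: cinner_def)
lemma cinner_sum_right: "cinner x (sum f S) = (\<Sum>i\<in>S. cinner x (f i))"
  by (induct S rule: infinite_finite_induct) (auto simp: cinner_add_right)
lemma cinner_sum_left: "cinner (sum f S) y = (\<Sum>i\<in>S. cinner (f i) y)"
  by (induct S rule: infinite_finite_induct) (auto simp: cinner_add_left)

lemma cinner_adj: "cinner x (A *v y) = cinner (mat_adj A *v x) y"
proof -
  have "cinner x (A *v y) = (\<Sum>i\<in>UNIV. \<Sum>j\<in>UNIV. cnj (x $ i) * A $ i $ j * y $ j)"
    unfolding cinner_def matrix_vector_mult_def by (simp add: sum_distrib_left mult.assoc)
  also have "\<dots> = (\<Sum>j\<in>UNIV. \<Sum>i\<in>UNIV. cnj (x $ i) * A $ i $ j * y $ j)"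
    by (rule sum.swap)
  also have "\<dots> = cinner (mat_adj A *v x) y"
    unfolding cinner_def mat_adj_def matrix_vector_mult_def
    by (simp add: sum_distrib_right sum_distrib_left cnj_sum mult.commute mult.left_commute)
  finally show ?thesis .
qed

lemma mat_adj_adj[simp]: "mat_adj (mat_adj A) = A"
  by (simp add: mat_adj_def vec_eq_iff)

lemma ket_bra_mult_vec: "ket_bra x y *v v = cinner y v *s x"
  by (simp add: ket_bra_def cinner_def matrix_vector_mult_def vec_eq_iff sum_distrib_left ac_simps)

lemma mult_ket_bra: "A ** ket_bra x y = ket_bra (A *v x) y"
  by (simp add: ket_bra_def matrix_matrix_mult_def matrix_vector_mult_def vec_eq_iff sum_distrib_left sum_distrib_right mult.assoc)

lemma ket_bra_mult: "ket_bra x y ** B = ket_bra x (mat_adj B *v y)"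
  by (simp add: ket_bra_def mat_adj_def matrix_matrix_mult_def matrix_vector_mult_def vec_eq_iff
      sum_distrib_left cnj_sum ac_simps)

lemma trace_ket_bra: "trace (ket_bra x y) = cinner y x"
  by (simp add: trace_def ket_bra_def cinner_def ac_simps)

lemma trace_sum: "trace (sum f S) = (\<Sum>i\<in>S. trace (f i))"
  by (simp add: trace_def sum.swap[of _ UNIV S])

lemma sum_matrix_mult: "sum f S ** B = (\<Sum>i\<in>S. f i ** B)"
  by (induct S rule: infinite_finite_induct) (simp_all add: matrix_matrix_mult_def vec_eq_iff distrib_right sum.distrib)

lemma sum_matrix_vec: "sum f S *v x = (\<Sum>i\<in>S. f i *v x)"
  by (induct S rule: infinite_finite_induct) (auto simp: matrix_vector_mult_add_rdistrib)

lemma mat_adj_ket_bra: "mat_adj (ket_bra x y) = ket_bra y x"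
  by (simp add: mat_adj_def ket_bra_def vec_eq_iff)

lemma mat_adj_sum: "mat_adj (sum f S) = (\<Sum>i\<in>S. mat_adj (f i))"
  by (induct S rule: infinite_finite_induct) (auto simp: mat_adj_def vec_eq_iff)

lemma mat_adj_scaleR: "mat_adj ((c::real) *\<^sub>R A) = c *\<^sub>R mat_adj A"
  by (simp add: mat_adj_def vec_eq_iff)

lemma herm_inner: "hermitian A \<Longrightarrow> (A *v x) \<bullet> y = x \<bullet> (A *v y)"
  by (metis Re_cinner cinner_adj hermitian_def cinner_cnj complex_cnj_cnj cnj.sel(1))

lemma kb_out: "Y ** ket_bra psi psi ** mat_adj Y = ket_bra (Y *v psi) (Y *v psi)"
  by (simp add: mult_ket_bra ket_bra_mult)

lemma trace_kb_M: "Re (trace (ket_bra a a ** M)) = a \<bullet> (M *v a)"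
  by (simp add: ket_bra_mult trace_ket_bra Re_cinner[symmetric] cinner_adj[symmetric])

lemma mv_scaleR: "(M::complex^'n^'n) *v (c *\<^sub>R x) = c *\<^sub>R (M *v x)"
  by (simp add: vec_scaleR_conv vec_eq_iff matrix_vector_mult_def sum_distrib_left ac_simps)

lemma mv_add: "(M::complex^'n^'n) *v (x + y) = M *v x + M *v y"
  by (simp add: matrix_vector_right_distrib)

lemma mv_diff: "(M::complex^'n^'n) *v (x - y) = M *v x - M *v y"
  by (simp add: matrix_vector_mult_diff_distrib)

lemma psd_nonneg: "psd M \<Longrightarrow> 0 \<le> x \<bullet> (M *v x)"
  unfolding psd_def by (metis Re_cinner)

lemma psd_herm: "psd M \<Longrightarrow> hermitian M"
  unfolding psd_def by simp

lemma quad_disc: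
  fixes A B C :: real
  assumes h: "\<And>t. 0 \<le> A + 2*t*B + t^2*C" and C: "0 \<le> C"
  shows "B^2 \<le> A*C"
proof (cases "C = 0")
  case True
  have "B = 0"
  proof (rule ccontr)
    assume "B \<noteq> 0"
    have "0 \<le> A + 2*(-(A+1)/(2*B))*B" using h[of "-(A+1)/(2*B)"] True by simp
    also have "\<dots> = -1" using \<open>B\<noteq>0\<close> by (simp add: field_simps)
    finally show False by simp
  qed
  then show ?thesis using True by simp
next
  case False
  with C have Cp: "C > 0" by simp
  have "0 \<le> A + 2*(-B/C)*B + (-B/C)^2*C" by (rule h)
  also have "\<dots> = (A*C - B^2)/C" using Cp by (simp add: field_simps power2_eq_square)
  finally show ?thesis using Cp by (simp add: divide_nonneg_pos zero_le_divide_iff)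
qed

lemma psd_expand:
  assumes "psd M"
  shows "(x + t *\<^sub>R y) \<bullet> (M *v (x + t *\<^sub>R y)) =
     x \<bullet> (M *v x) + 2*t*(x \<bullet> (M *v y)) + t^2 * (y \<bullet> (M *v y))"
proof -
  have "y \<bullet> (M *v x) = x \<bullet> (M *v y)"
    using herm_inner[OF psd_herm[OF assms], of y x] by (simp add: inner_commute)
  then show ?thesis
    by (simp add: mv_add mv_scaleR inner_add_left inner_add_right power2_eq_square algebra_simps)
qed

lemma psd_cs2:
  assumes "psd M"
  shows "(x \<bullet> (M *v y))^2 \<le> (x \<bullet> (M *v x)) * (y \<bullet> (M *v y))"
  apply (rule quad_disc)
  using psd_nonneg[OF assms, of "x + _ *\<^sub>R y"] psd_expand[OF assms] psd_nonneg[OF assms] by auto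

lemma psd_zero:
  assumes "psd M" "x \<bullet> (M *v x) = 0"
  shows "M *v x = 0"
proof -
  have "((M *v x) \<bullet> (M *v x))^2 \<le> ((M *v x) \<bullet> (M *v (M *v x))) * (x \<bullet> (M *v x))"
    by (rule psd_cs2[OF assms(1)])
  then have "(M *v x) \<bullet> (M *v x) = 0" using assms(2) by simp
  then show ?thesis by simp
qed

definition QA :: "complex^'n^'n \<Rightarrow> ('k \<Rightarrow> complex^'n) \<Rightarrow> real" where
  "QA M a = (\<Sum>k\<in>UNIV. a k \<bullet> (M *v a k))"
definition QB :: "complex^'n^'n \<Rightarrow> ('k \<Rightarrow> complex^'n) \<Rightarrow> ('k \<Rightarrow> complex^'n) \<Rightarrow> real" where
  "QB M a b = (\<Sum>k\<in>UNIV. a k \<bullet> (M *v b k))"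

lemma QA_nonneg: "psd M \<Longrightarrow> 0 \<le> QA M a"
  unfolding QA_def by (intro sum_nonneg psd_nonneg)

lemma QA_expand:
  fixes a b :: "'k::finite \<Rightarrow> complex^'n"
  assumes "psd M"
  shows "QA M (\<lambda>k. a k + t *\<^sub>R b k) = QA M a + 2*t*QB M a b + t^2 * QA M b"
  unfolding QA_def QB_def using psd_expand[OF assms]
  by (simp add: sum.distrib sum_distrib_left)

lemma QA_cs:
  fixes a b :: "'k::finite \<Rightarrow> complex^'n"
  assumes "psd M"
  shows "(QB M a b)^2 \<le> QA M a * QA M b"
proof (rule quad_disc)
  fix t show "0 \<le> QA M a + 2*t*QB M a b + t^2 * QA M b"
    using QA_nonneg[OF assms, of "\<lambda>k. a k + t *\<^sub>R b k"] QA_expand[OF assms, of a t b] by simp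
qed (rule QA_nonneg[OF assms])

lemma QA_zero:
  fixes a :: "'k::finite \<Rightarrow> complex^'n"
  assumes "psd M" "QA M a = 0"
  shows "M *v a k = 0"
proof -
  have "\<forall>k\<in>UNIV. a k \<bullet> (M *v a k) = 0"
    using assms(2) unfolding QA_def by (subst sum_nonneg_eq_0_iff[symmetric]) (auto intro: psd_nonneg[OF assms(1)])
  then show ?thesis using psd_zero[OF assms(1)] by auto
qed

lemma QA_eq_char:
  fixes a b :: "'k::finite \<Rightarrow> complex^'n"
  assumes "psd M"
  shows "((QA M a > 0 \<longrightarrow> (QB M a b)^2 = QA M a * QA M b) \<and> (QA M a = 0 \<longrightarrow> QA M b = 0))
     \<longleftrightarrow> (\<exists>s::real. \<forall>k. M *v b k = s *\<^sub>R (M *v a k))"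
proof
  assume H: "(QA M a > 0 \<longrightarrow> (QB M a b)^2 = QA M a * QA M b) \<and> (QA M a = 0 \<longrightarrow> QA M b = 0)"
  show "\<exists>s::real. \<forall>k. M *v b k = s *\<^sub>R (M *v a k)"
  proof (cases "QA M a = 0")
    case True
    then show ?thesis using H QA_zero[OF assms] by (intro exI[of _ 0]) auto
  next
    case False
    then have pos: "QA M a > 0" using QA_nonneg[OF assms, of a] by simp
    define s where "s = QB M a b / QA M a"
    have "QA M (\<lambda>k. b k + (-s) *\<^sub>R a k) = QA M b - 2 * s * QB M a b + s^2 * QA M a"
      using QA_expand[OF assms, of b "-s" a] herm_inner[OF psd_herm[OF assms]]
      by (simp add: QB_def inner_commute)
    also have "\<dots> = 0" using H pos unfolding s_def by (simp add: field_simps power2_eq_square)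
    finally have "\<forall>k. M *v (b k + (-s) *\<^sub>R a k) = 0" using QA_zero[OF assms] by blast
    then show ?thesis by (intro exI[of _ s]) (simp add: mv_diff mv_scaleR)
  qed
next
  assume "\<exists>s::real. \<forall>k. M *v b k = s *\<^sub>R (M *v a k)"
  then obtain s where s: "\<And>k. M *v b k = s *\<^sub>R (M *v a k)" by blast
  have hB: "QB M a b = s * QA M a" unfolding QB_def QA_def by (simp add: s sum_distrib_left)
  have t: "b k \<bullet> (M *v b k) = s^2 * (a k \<bullet> (M *v a k))" for k
  proof -
    have h: "(M *v b k) \<bullet> a k = b k \<bullet> (M *v a k)" by (rule herm_inner[OF psd_herm[OF assms]])
    have "b k \<bullet> (M *v b k) = s * (b k \<bullet> (M *v a k))" by (simp add: s)
    also have "\<dots> = s * ((M *v b k) \<bullet> a k)" using h by simp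
    also have "\<dots> = s^2 * (a k \<bullet> (M *v a k))" by (simp add: s power2_eq_square inner_commute)
    finally show ?thesis .
  qed
  have "QA M b = s^2 * QA M a" unfolding QA_def by (simp add: t sum_distrib_left)
  note hC = this
  show "(QA M a > 0 \<longrightarrow> (QB M a b)^2 = QA M a * QA M b) \<and> (QA M a = 0 \<longrightarrow> QA M b = 0)"
    by (simp add: hB hC power2_eq_square)
qed

lemma lin_quad_zero:
  fixes c d :: real
  assumes h: "\<And>t. 2*t*c + t^2*d \<le> 0"
  shows "c = 0"
proof -
  have "d \<le> 0" using h[of 1] h[of "-1"] by simp
  have "(-c)^2 \<le> 0 * (-d)"
  proof (rule quad_disc)
    fix t :: real show "0 \<le> 0 + 2*t*(-c) + t^2*(-d)" using h[of t] by linarith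
  qed (use \<open>d \<le> 0\<close> in simp)
  then show ?thesis by simp
qed

lemma eig_exists:
  fixes f :: "'a::euclidean_space \<Rightarrow> 'a"
  assumes lf: "linear f" and sa: "\<And>x y. f x \<bullet> y = x \<bullet> f y"
    and W: "subspace W" and inv: "f ` W \<subseteq> W" and nz: "\<not> W \<subseteq> {0}"
  shows "\<exists>e\<in>W. norm e = 1 \<and> (\<exists>c. f e = c *\<^sub>R e)"
proof -
  define K where "K = W \<inter> sphere 0 1"
  have cK: "compact K" unfolding K_def
    by (intro closed_Int_compact closed_subspace W compact_sphere)
  obtain x where x: "x \<in> W" "x \<noteq> 0" using nz by auto
  have "(1/norm x) *\<^sub>R x \<in> K" unfolding K_def using x W
    by (simp add: subspace_scale norm_sgn)
  then have neK: "K \<noteq> {}" by auto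
  have cont: "continuous_on K (\<lambda>x. x \<bullet> f x)"
  proof -
    have "bounded_linear f" using lf by (simp add: linear_conv_bounded_linear)
    then have "continuous_on K f" by (rule linear_continuous_on)
    then show ?thesis by (intro continuous_on_inner continuous_on_id)
  qed
  obtain e where eK: "e \<in> K" and emax: "\<And>y. y \<in> K \<Longrightarrow> y \<bullet> f y \<le> e \<bullet> f e"
    using continuous_attains_sup[OF cK neK cont] by blast
  have eW: "e \<in> W" and en: "norm e = 1" using eK unfolding K_def by auto
  have ee: "e \<bullet> e = 1" using en by (simp add: norm_eq_1)
  define l where "l = e \<bullet> f e"
  have orth: "y \<bullet> f e = 0" if yW: "y \<in> W" and ey: "e \<bullet> y = 0" for y
  proof (rule lin_quad_zero)
    fix t :: real
    define v where "v = e + t *\<^sub>R y"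
    have vW: "v \<in> W" unfolding v_def using eW yW W by (simp add: subspace_add subspace_scale)
    have vv: "v \<bullet> v = 1 + t^2 * (y \<bullet> y)" unfolding v_def
      using ee ey by (simp add: inner_add_left inner_add_right inner_commute power2_eq_square)
    then have vpos: "v \<bullet> v > 0" by (simp add: add_pos_nonneg)
    then have nv: "norm v > 0" by simp
    have "(1/norm v) *\<^sub>R v \<in> K" unfolding K_def using vW W nv by (simp add: subspace_scale)
    then have "((1/norm v) *\<^sub>R v) \<bullet> f ((1/norm v) *\<^sub>R v) \<le> l" unfolding l_def by (rule emax)
    then have "(1/norm v)^2 * (v \<bullet> f v) \<le> l"
      by (simp add: linear_cmul[OF lf] power2_eq_square)
    then have "v \<bullet> f v \<le> l * (v \<bullet> v)"
      using nv by (simp add: field_simps power2_norm_eq_inner[symmetric] power2_eq_square)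
    moreover have "v \<bullet> f v = l + 2*t*(y \<bullet> f e) + t^2*(y \<bullet> f y)"
      unfolding v_def l_def using sa[of e y]
      by (simp add: linear_add[OF lf] linear_cmul[OF lf] inner_add_left inner_add_right power2_eq_square
          algebra_simps inner_commute)
    ultimately show "2*t*(y \<bullet> f e) + t^2*(y \<bullet> f y - l * (y \<bullet> y)) \<le> 0"
      using vv by (simp add: algebra_simps)
  qed
  define z where "z = f e - l *\<^sub>R e"
  have zW: "z \<in> W" unfolding z_def using inv eW W by (auto simp: subspace_diff subspace_scale)
  have ez: "e \<bullet> z = 0" unfolding z_def l_def using ee by (simp add: inner_diff_right)
  have "z \<bullet> f e = 0" by (rule orth[OF zW ez])
  moreover have "z \<bullet> e = 0" using ez by (simp add: inner_commute)
  ultimately have "z \<bullet> z = 0" unfolding z_def[symmetric] by (simp add: z_def inner_diff_right inner_diff_left)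
  then have "z = 0" by simp
  then show ?thesis using eW en unfolding z_def by auto
qed

lemma spectral_sub:
  fixes f :: "'a::euclidean_space \<Rightarrow> 'a"
  assumes lf: "linear f" and sa: "\<And>x y. f x \<bullet> y = x \<bullet> f y"
  shows "subspace W \<Longrightarrow> f ` W \<subseteq> W \<Longrightarrow> \<exists>B. finite B \<and> B \<subseteq> W \<and> pairwise orthogonal B \<and>
           (\<forall>e\<in>B. norm e = 1 \<and> (\<exists>c. f e = c *\<^sub>R e)) \<and> W \<subseteq> span B"
proof (induct "dim W" arbitrary: W rule: less_induct)
  case less
  show ?case
  proof (cases "W \<subseteq> {0}")
    case True
    then show ?thesis by (intro exI[of _ "{}"]) (auto simp: span_zero)
  next
    case False
    obtain e where eW: "e \<in> W" and en: "norm e = 1" and ec: "\<exists>c. f e = c *\<^sub>R e"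
      using eig_exists[OF lf sa less.prems False] by blast
    obtain c where c: "f e = c *\<^sub>R e" using ec by blast
    have ee: "e \<bullet> e = 1" using en by (simp add: norm_eq_1)
    define W' where "W' = W \<inter> {x. e \<bullet> x = 0}"
    have sW': "subspace W'" unfolding W'_def
      by (intro subspace_inter less.prems(1) subspace_hyperplane)
    have iW': "f ` W' \<subseteq> W'"
    proof
      fix y assume "y \<in> f ` W'"
      then obtain x where x: "x \<in> W'" "y = f x" by blast
      have "e \<bullet> f x = c * (e \<bullet> x)" using sa[of e x] c by simp
      then show "y \<in> W'" using x less.prems(2) unfolding W'_def by auto
    qed
    have eW': "e \<notin> W'" using ee unfolding W'_def by auto
    have "W' \<subseteq> W" unfolding W'_def by auto
    then have "W' \<subset> W" using eW eW' by blast
    then have "span W' \<subset> span W"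
      using sW' less.prems(1) by (metis span_eq_iff)
    then have "dim W' < dim W" by (rule dim_psubset)
    then obtain B' where B': "finite B'" "B' \<subseteq> W'" "pairwise orthogonal B'"
      "\<forall>e\<in>B'. norm e = 1 \<and> (\<exists>c. f e = c *\<^sub>R e)" "W' \<subseteq> span B'"
      using less.hyps[OF _ sW' iW'] by blast
    have eB': "e \<notin> B'" using B'(2) ee unfolding W'_def by auto
    have po: "pairwise orthogonal (insert e B')"
      using B'(2,3) unfolding pairwise_def orthogonal_def W'_def
      by (auto simp: inner_commute)
    have sp: "W \<subseteq> span (insert e B')"
    proof
      fix x assume xW: "x \<in> W"
      have "x - (e \<bullet> x) *\<^sub>R e \<in> W'" unfolding W'_def using xW eW less.prems(1) ee
        by (simp add: subspace_diff subspace_scale inner_diff_right)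
      then have "x - (e \<bullet> x) *\<^sub>R e \<in> span (insert e B')" using B'(5)
        by (meson span_mono subset_insertI subsetD)
      moreover have "(e \<bullet> x) *\<^sub>R e \<in> span (insert e B')" by (simp add: span_base span_scale)
      ultimately have "(x - (e \<bullet> x) *\<^sub>R e) + (e \<bullet> x) *\<^sub>R e \<in> span (insert e B')" by (rule span_add)
      then show "x \<in> span (insert e B')" by simp
    qed
    show ?thesis
      using B' eW en c po sp unfolding W'_def
      by (intro exI[of _ "insert e B'"]) auto
  qed
qed

lemma spectral:
  fixes f :: "'a::euclidean_space \<Rightarrow> 'a"
  assumes lf: "linear f" and sa: "\<And>x y. f x \<bullet> y = x \<bullet> f y"
  shows "\<exists>B. finite B \<and> (\<forall>e\<in>B. \<exists>c. f e = c *\<^sub>R e) \<and> (\<forall>x. (\<Sum>e\<in>B. (x \<bullet> e) *\<^sub>R e) = x)"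
proof -
  obtain B where B: "finite B" "pairwise orthogonal B" "\<forall>e\<in>B. norm e = 1 \<and> (\<exists>c. f e = c *\<^sub>R e)"
    "UNIV \<subseteq> span B"
    using spectral_sub[OF lf sa, of UNIV] by auto
  show ?thesis
    using B orthonormal_basis_expand[OF B(2)] by (intro exI[of _ B]) auto
qed

lemma scaleR_mv: "((c::real) *\<^sub>R (A::complex^'n^'n)) *v x = c *\<^sub>R (A *v x)"
  by (simp add: vec_scaleR_conv vec_eq_iff matrix_vector_mult_def sum_distrib_left ac_simps)

lemma linear_mv_left: "linear (\<lambda>A::complex^'n^'n. A *v x)"
  by (rule linearI) (simp_all add: matrix_vector_mult_add_rdistrib scaleR_mv)

lemma linear_mv_right: "linear (\<lambda>x. (M::complex^'n^'n) *v x)"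
  by (rule linearI) (simp_all add: mv_add mv_scaleR)

lemma outcome_prob_eq: "outcome_prob Y psi M m t = QA (M m) (\<lambda>k. Y t k *v psi)"
  unfolding outcome_prob_def out_state_def QA_def
  by (simp add: kb_out sum_matrix_mult trace_sum trace_kb_M)

lemma C_Ups_eq: "C_Ups Y' psi = 4 * (\<Sum>k\<in>UNIV. (Y' k *v psi) \<bullet> (Y' k *v psi))"
  unfolding C_Ups_def
  by (simp add: kb_out trace_sum trace_ket_bra Re_cinner)

lemma outcome_deriv:
  fixes Y :: "real \<Rightarrow> 'n::finite \<Rightarrow> complex^'n^'n" and Y' :: "'n \<Rightarrow> complex^'n^'n" and psi :: "complex^'n"
  assumes d: "\<And>k. ((\<lambda>t. Y t k) has_vector_derivative Y' k) (at \<theta>)" and pM: "psd (M m)"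
  shows "deriv (outcome_prob Y psi M m) \<theta> = 2 * QB (M m) (\<lambda>k. Y \<theta> k *v psi) (\<lambda>k. Y' k *v psi)"
proof -
  have bl1: "bounded_linear (\<lambda>A::complex^'n^'n. A *v psi)"
    using linear_mv_left linear_conv_bounded_linear by blast
  have bl2: "bounded_linear (\<lambda>x. M m *v x)"
    using linear_mv_right linear_conv_bounded_linear by blast
  have da: "((\<lambda>t. Y t k *v psi) has_vector_derivative (Y' k *v psi)) (at \<theta>)" for k
    by (rule bounded_linear.has_vector_derivative[OF bl1 d])
  have dMa: "((\<lambda>t. M m *v (Y t k *v psi)) has_vector_derivative (M m *v (Y' k *v psi))) (at \<theta>)" for k
    by (rule bounded_linear.has_vector_derivative[OF bl2 da])
  have "((\<lambda>t. \<Sum>k\<in>UNIV. (Y t k *v psi) \<bullet> (M m *v (Y t k *v psi))) has_vector_derivative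
      (\<Sum>k\<in>UNIV. (Y \<theta> k *v psi) \<bullet> (M m *v (Y' k *v psi)) + (Y' k *v psi) \<bullet> (M m *v (Y \<theta> k *v psi)))) (at \<theta>)"
    by (intro has_vector_derivative_sum bounded_bilinear.has_vector_derivative[OF bounded_bilinear_inner] da dMa)
  moreover have "(\<Sum>k\<in>UNIV. (Y \<theta> k *v psi) \<bullet> (M m *v (Y' k *v psi)) + (Y' k *v psi) \<bullet> (M m *v (Y \<theta> k *v psi)))
      = 2 * QB (M m) (\<lambda>k. Y \<theta> k *v psi) (\<lambda>k. Y' k *v psi)"
    unfolding QB_def using herm_inner[OF psd_herm[OF pM]]
    by (simp add: sum_distrib_left inner_commute)
  ultimately have "(outcome_prob Y psi M m has_real_derivative 2 * QB (M m) (\<lambda>k. Y \<theta> k *v psi) (\<lambda>k. Y' k *v psi)) (at \<theta>)"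
    unfolding has_real_derivative_iff_has_vector_derivative outcome_prob_eq[abs_def] QA_def by simp
  then show ?thesis by (rule DERIV_imp_deriv)
qed

lemma povm_sum_QA:
  assumes "is_povm N M"
  shows "(\<Sum>m<N. QA (M m) b) = (\<Sum>k\<in>UNIV. b k \<bullet> b k)"
proof -
  have "(\<Sum>m<N. QA (M m) b) = (\<Sum>k\<in>UNIV. b k \<bullet> ((\<Sum>m<N. M m) *v b k))"
    unfolding QA_def by (simp add: sum_matrix_vec inner_sum_right sum.swap[of _ "{..<N}"])
  also have "\<dots> = (\<Sum>k\<in>UNIV. b k \<bullet> b k)" using assms unfolding is_povm_def by simp
  finally show ?thesis .
qed

lemma fisher_abs:
  fixes a b :: "'n::finite \<Rightarrow> complex^'n"
  assumes povm: "is_povm N M"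
  defines "F \<equiv> (\<Sum>m\<in>{m. m < N \<and> QA (M m) a > 0}. (2 * QB (M m) a b)^2 / QA (M m) a)"
  shows "F \<le> 4 * (\<Sum>k\<in>UNIV. b k \<bullet> b k)"
    and "F = 4 * (\<Sum>k\<in>UNIV. b k \<bullet> b k) \<longleftrightarrow> (\<forall>m<N. \<exists>s::real. \<forall>k. M m *v b k = s *\<^sub>R (M m *v a k))"
proof -
  have psdM: "psd (M m)" if "m < N" for m using povm that unfolding is_povm_def by auto
  define d where "d m = 4 * QA (M m) b - (if QA (M m) a > 0 then (2 * QB (M m) a b)^2 / QA (M m) a else 0)" for m
  have Fs: "F = (\<Sum>m<N. if QA (M m) a > 0 then (2 * QB (M m) a b)^2 / QA (M m) a else 0)"
  proof -
    have "F = (\<Sum>m\<in>{m\<in>{..<N}. QA (M m) a > 0}. (2 * QB (M m) a b)^2 / QA (M m) a)"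
      unfolding F_def by (rule sum.cong) auto
    also have "\<dots> = (\<Sum>m<N. if QA (M m) a > 0 then (2 * QB (M m) a b)^2 / QA (M m) a else 0)"
      by (rule sum.inter_filter) simp
    finally show ?thesis .
  qed
  have diff: "4 * (\<Sum>k\<in>UNIV. b k \<bullet> b k) - F = (\<Sum>m<N. d m)"
    unfolding Fs d_def povm_sum_QA[OF povm, symmetric] by (simp add: sum_subtractf sum_distrib_left)
  have dnn: "0 \<le> d m" if "m < N" for m
  proof (cases "QA (M m) a > 0")
    case True
    have "(QB (M m) a b)^2 \<le> QA (M m) a * QA (M m) b" by (rule QA_cs[OF psdM[OF that]])
    then have "(2 * QB (M m) a b)^2 / QA (M m) a \<le> 4 * QA (M m) b"
      using True by (simp add: field_simps power_mult_distrib)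
    then show ?thesis using True unfolding d_def by simp
  next
    case False
    then show ?thesis unfolding d_def using QA_nonneg[OF psdM[OF that], of b] by simp
  qed
  have d0: "d m = 0 \<longleftrightarrow> (\<exists>s::real. \<forall>k. M m *v b k = s *\<^sub>R (M m *v a k))" if "m < N" for m
  proof -
    have "d m = 0 \<longleftrightarrow> ((QA (M m) a > 0 \<longrightarrow> (QB (M m) a b)^2 = QA (M m) a * QA (M m) b) \<and> (QA (M m) a = 0 \<longrightarrow> QA (M m) b = 0))"
      using QA_nonneg[OF psdM[OF that], of a] unfolding d_def
      by (auto simp: field_simps power_mult_distrib)
    then show ?thesis using QA_eq_char[OF psdM[OF that]] by simp
  qed
  have "0 \<le> (\<Sum>m<N. d m)" by (rule sum_nonneg) (simp add: dnn)
  then show "F \<le> 4 * (\<Sum>k\<in>UNIV. b k \<bullet> b k)" using diff by linarith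
  have "F = 4 * (\<Sum>k\<in>UNIV. b k \<bullet> b k) \<longleftrightarrow> (\<Sum>m<N. d m) = 0" using diff by linarith
  also have "\<dots> \<longleftrightarrow> (\<forall>m<N. d m = 0)" by (subst sum_nonneg_eq_0_iff) (auto simp: dnn)
  also have "\<dots> \<longleftrightarrow> (\<forall>m<N. \<exists>s::real. \<forall>k. M m *v b k = s *\<^sub>R (M m *v a k))" using d0 by simp
  finally show "F = 4 * (\<Sum>k\<in>UNIV. b k \<bullet> b k) \<longleftrightarrow> (\<forall>m<N. \<exists>s::real. \<forall>k. M m *v b k = s *\<^sub>R (M m *v a k))" .
qed

lemma cinner_deriv:
  fixes x y :: "real \<Rightarrow> complex^'n"
  assumes dx: "(x has_vector_derivative x') (at t)" and dy: "(y has_vector_derivative y') (at t)"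
  shows "((\<lambda>s. cinner (x s) (y s)) has_vector_derivative (cinner x' (y t) + cinner (x t) y')) (at t)"
proof -
  have cx: "((\<lambda>s. cnj (x s $ i)) has_vector_derivative cnj (x' $ i)) (at t)" for i
    using bounded_linear.has_vector_derivative[OF bounded_linear_cnj
        bounded_linear.has_vector_derivative[OF bounded_linear_vec_nth dx]] .
  have cy: "((\<lambda>s. y s $ i) has_vector_derivative (y' $ i)) (at t)" for i
    using bounded_linear.has_vector_derivative[OF bounded_linear_vec_nth dy] .
  have "((\<lambda>s. \<Sum>i\<in>UNIV. cnj (x s $ i) * y s $ i) has_vector_derivative
      (\<Sum>i\<in>UNIV. cnj (x t $ i) * y' $ i + cnj (x' $ i) * y t $ i)) (at t)"
    by (intro has_vector_derivative_sum has_vector_derivative_mult cx cy)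
  then show ?thesis unfolding cinner_def by (simp add: sum.distrib add.commute)
qed

lemma mat_adj_add: "mat_adj (A + B) = mat_adj A + mat_adj B"
  by (simp add: mat_adj_def vec_eq_iff)
lemma mat_adj_diff: "mat_adj (A - B) = mat_adj A - mat_adj B"
  by (simp add: mat_adj_def vec_eq_iff)
lemma kb_scale_right: "ket_bra x (z *s y) = ket_bra (cnj z *s x) y"
  by (simp add: ket_bra_def vec_eq_iff ac_simps)
lemma kb_add_left: "ket_bra (x + x') y = ket_bra x y + ket_bra x' y"
  by (simp add: ket_bra_def vec_eq_iff distrib_right)

lemma ifs_smult: "(if P then (1::complex) else 0) *s v = (if P then v else 0)"
  by simp

lemma if_mult1: "(if P then (1::complex) else 0) * z = (if P then z else 0)"
  by simp
lemma if_smult: "(if P then (z::complex) else 0) *s v = (if P then z *s v else 0)"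
  by simp

lemma herm_ext:
  fixes w c :: "'n::finite \<Rightarrow> complex^'n"
  assumes orth: "\<And>j k. cinner (w j) (w k) = (if j = k then 1 else 0)"
    and sym: "\<And>j k. j \<in> S \<Longrightarrow> k \<in> S \<Longrightarrow> cinner (w j) (c k) = cinner (c j) (w k)"
  shows "\<exists>L. hermitian L \<and> (\<forall>k\<in>S. L *v w k = c k)"
proof -
  define L where "L = (\<Sum>k\<in>S. ket_bra (c k) (w k)) + (\<Sum>k\<in>S. ket_bra (w k) (c k))
     - (\<Sum>j\<in>S. \<Sum>k\<in>S. ket_bra (cinner (w j) (c k) *s w j) (w k))"
  have fS: "finite S" by simp
  have "mat_adj (\<Sum>j\<in>S. \<Sum>k\<in>S. ket_bra (cinner (w j) (c k) *s w j) (w k))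
      = (\<Sum>j\<in>S. \<Sum>k\<in>S. ket_bra (cinner (w k) (c j) *s w k) (w j))"
  proof -
    have t: "cnj (cinner (w j) (c k)) = cinner (w k) (c j)" if "j \<in> S" "k \<in> S" for j k
    proof -
      have "cinner (c k) (w j) = cnj (cinner (w j) (c k))" by (rule cinner_cnj)
      then show ?thesis using sym[OF that(2,1)] by simp
    qed
    show ?thesis
      unfolding mat_adj_sum mat_adj_ket_bra kb_scale_right
      by (intro sum.cong refl) (simp only: t)
  qed
  also have "\<dots> = (\<Sum>j\<in>S. \<Sum>k\<in>S. ket_bra (cinner (w j) (c k) *s w j) (w k))"
    by (rule sum.swap)
  finally have a3: "mat_adj (\<Sum>j\<in>S. \<Sum>k\<in>S. ket_bra (cinner (w j) (c k) *s w j) (w k))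
      = (\<Sum>j\<in>S. \<Sum>k\<in>S. ket_bra (cinner (w j) (c k) *s w j) (w k))" .
  have herm: "hermitian L" unfolding hermitian_def L_def
    by (simp only: mat_adj_add mat_adj_diff a3) (simp add: mat_adj_sum mat_adj_ket_bra add.commute)
  have "L *v w k0 = c k0" if k0: "k0 \<in> S" for k0
  proof -
    have e1: "(\<Sum>k\<in>S. ket_bra (c k) (w k)) *v w k0 = c k0"
      using k0 by (simp add: sum_matrix_vec ket_bra_mult_vec orth ifs_smult)
    have e2: "(\<Sum>k\<in>S. ket_bra (w k) (c k)) *v w k0 = (\<Sum>k\<in>S. cinner (w k) (c k0) *s w k)"
      using k0 by (simp add: sum_matrix_vec ket_bra_mult_vec sym)
    have e3: "(\<Sum>j\<in>S. \<Sum>k\<in>S. ket_bra (cinner (w j) (c k) *s w j) (w k)) *v w k0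
        = (\<Sum>j\<in>S. cinner (w j) (c k0) *s w j)"
      using k0 by (simp add: sum_matrix_vec ket_bra_mult_vec orth ifs_smult if_mult1 if_smult)
    show ?thesis unfolding L_def
      by (simp add: matrix_vector_mult_add_rdistrib matrix_vector_mult_diff_rdistrib e1 e2 e3)
  qed
  then show ?thesis using herm by blast
qed

lemma smult_scaleR_comm: "(z::complex) *s ((r::real) *\<^sub>R v) = r *\<^sub>R (z *s (v::complex^'n))"
  by (simp add: vec_scaleR_conv vec_eq_iff ac_simps)

lemma linear_smult: "linear (\<lambda>v::complex^'n. z *s v)"
  by (rule linearI) (simp_all add: vec_eq_iff distrib_left smult_scaleR_comm)

lemma smult_split: "(z::complex) *s (v::complex^'n) = Re z *\<^sub>R v + Im z *\<^sub>R (\<i> *s v)"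
  by (simp add: vec_eq_iff vec_scaleR_conv) (simp add: complex_eq_iff algebra_simps)

lemma Im_cinner: "Im (cinner e x) = e \<bullet> ((-\<i>) *s x)"
proof -
  have "cinner e ((-\<i>) *s x) = (-\<i>) * cinner e x" by (rule cinner_scale_right)
  then have "Re (cinner e ((-\<i>) *s x)) = Im (cinner e x)" by simp
  then show ?thesis by (simp only: Re_cinner)
qed

lemma expand_complex:
  fixes B :: "(complex^'n) set"
  assumes exp: "\<And>x. (\<Sum>e\<in>B. (x \<bullet> e) *\<^sub>R e) = x"
  shows "(\<Sum>e\<in>B. cinner e x *s e) = 2 *\<^sub>R x"
proof -
  have "(\<Sum>e\<in>B. cinner e x *s e) = (\<Sum>e\<in>B. (x \<bullet> e) *\<^sub>R e) + (\<Sum>e\<in>B. (((-\<i>) *s x) \<bullet> e) *\<^sub>R (\<i> *s e))"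
    by (simp add: smult_split[of "cinner _ x"] Re_cinner Im_cinner inner_commute sum.distrib sum_subtractf sum_negf)
  also have "(\<Sum>e\<in>B. (((-\<i>) *s x) \<bullet> e) *\<^sub>R (\<i> *s e)) = \<i> *s (\<Sum>e\<in>B. (((-\<i>) *s x) \<bullet> e) *\<^sub>R e)"
    by (simp add: linear_sum[OF linear_smult] smult_scaleR_comm o_def)
  also have "\<dots> = x" by (simp only: exp) (simp add: vector_smult_assoc)
  finally show ?thesis by (simp add: exp scaleR_2)
qed

lemma psd_half_kb: "psd ((1/2::real) *\<^sub>R ket_bra e e)"
proof -
  have "cinner x (((1/2::real) *\<^sub>R ket_bra e e) *v x) = complex_of_real (1/2 * (cmod (cinner e x))^2)" for x
  proof -
    have "cinner x (((1/2::real) *\<^sub>R ket_bra e e) *v x) = complex_of_real (1/2) * (cinner e x * cnj (cinner e x))"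
      by (simp add: scaleR_mv ket_bra_mult_vec vec_scaleR_conv cinner_scale_right cinner_cnj[of x e] ac_simps)
    also have "\<dots> = complex_of_real (1/2 * (cmod (cinner e x))^2)"
      by (simp add: complex_mult_cnj cmod_power2)
    finally show ?thesis .
  qed
  note h = this
  show ?thesis unfolding psd_def hermitian_def
  proof (intro conjI allI)
    show "mat_adj ((1/2::real) *\<^sub>R ket_bra e e) = (1/2::real) *\<^sub>R ket_bra e e"
      by (simp add: mat_adj_scaleR mat_adj_ket_bra)
  next
    fix x show "Im (cinner x (((1/2::real) *\<^sub>R ket_bra e e) *v x)) = 0" unfolding h by simp
  next
    fix x show "0 \<le> Re (cinner x (((1/2::real) *\<^sub>R ket_bra e e) *v x))" unfolding h by simp
  qed
qed

lemma povm_from_herm: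
  fixes L :: "complex^'n^'n"
  assumes hL: "hermitian L"
  shows "\<exists>N M. is_povm N M \<and> (\<forall>m<N. \<exists>s::real. \<forall>x. M m *v (L *v x) = s *\<^sub>R (M m *v x))"
proof -
  obtain B where fB: "finite B" and eig: "\<forall>e\<in>B. \<exists>c. L *v e = c *\<^sub>R e"
      and exp: "\<And>x. (\<Sum>e\<in>B. (x \<bullet> e) *\<^sub>R e) = x"
    using spectral[OF linear_mv_right, of L] herm_inner[OF hL] by blast
  obtain g where g: "bij_betw g {0..<card B} B" using ex_bij_betw_nat_finite[OF fB] by blast
  define N where "N = card B"
  define M where "M m = (1/2::real) *\<^sub>R ket_bra (g m) (g m)" for m
  have gB: "g m \<in> B" if "m < N" for m using g that unfolding N_def bij_betw_def by auto
  have sumM: "(\<Sum>m<N. M m) = mat 1"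
  proof (subst matrix_eq, intro allI)
    fix x :: "complex^'n"
    have "(\<Sum>m<N. M m) *v x = (\<Sum>m\<in>{0..<card B}. (1/2::real) *\<^sub>R (cinner (g m) x *s g m))"
      unfolding M_def N_def by (simp add: sum_matrix_vec scaleR_mv ket_bra_mult_vec atLeast0LessThan)
    also have "\<dots> = (\<Sum>e\<in>B. (1/2::real) *\<^sub>R (cinner e x *s e))"
      by (rule sum.reindex_bij_betw[OF g])
    also have "\<dots> = (1/2::real) *\<^sub>R (\<Sum>e\<in>B. cinner e x *s e)" by (simp add: scaleR_sum_right)
    also have "\<dots> = x" by (simp add: expand_complex[OF exp])
    finally show "(\<Sum>m<N. M m) *v x = mat 1 *v x" by simp
  qed
  have povm: "is_povm N M" unfolding is_povm_def using sumM by (simp add: M_def psd_half_kb)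
  have "\<exists>s::real. \<forall>x. M m *v (L *v x) = s *\<^sub>R (M m *v x)" if mN: "m < N" for m
  proof -
    obtain c where c: "L *v g m = c *\<^sub>R g m" using eig gB[OF mN] by blast
    have "cinner (g m) (L *v x) = complex_of_real c * cinner (g m) x" for x
    proof -
      have "cinner (g m) (L *v x) = cinner (L *v g m) x"
        using cinner_adj[of "g m" L x] hL unfolding hermitian_def by simp
      then show ?thesis by (simp add: c vec_scaleR_conv cinner_scale_left)
    qed
    then show ?thesis
      by (intro exI[of _ c]) (simp add: M_def scaleR_mv ket_bra_mult_vec vec_scaleR_conv vector_smult_assoc ac_simps)
  qed
  then show ?thesis using povm by blast
qed

lemma deriv_zero_on:
  assumes d: "(f has_vector_derivative f') (at \<theta>)" and T: "open T" "\<theta> \<in> T" and z: "\<forall>t\<in>T. f t = 0"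
  shows "f' = 0"
proof -
  have "((\<lambda>t. 0) has_vector_derivative f') (at \<theta>)"
    by (rule has_vector_derivative_transform_within_open[OF d T]) (simp add: z)
  then show ?thesis using has_vector_derivative_const vector_derivative_unique_at by blast
qed

lemma deriv_real_on:
  fixes f :: "real \<Rightarrow> complex"
  assumes d: "(f has_vector_derivative f') (at \<theta>)" and T: "open T" "\<theta> \<in> T" and z: "\<forall>t\<in>T. Im (f t) = 0"
  shows "Im f' = 0"
  using deriv_zero_on[OF bounded_linear.has_vector_derivative[OF bounded_linear_Im d] T] z by simp

lemma cinner_real_scale: "cinner (complex_of_real r *s x) y = complex_of_real r * cinner x y"
  by (simp add: cinner_scale_left)

lemma mv_smult: "(L::complex^'n^'n) *v (z *s v) = z *s (L *v v)"
  by (simp add: vec_eq_iff matrix_vector_mult_def sum_distrib_left ac_simps)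

theorem theorem2p6:
  fixes \<Theta> :: "real set"
    and psi0 :: "complex^'n"
    and Y Y' :: "real \<Rightarrow> 'n \<Rightarrow> complex^'n^'n"
    and p :: "real \<Rightarrow> 'n \<Rightarrow> real"
    and w w' :: "real \<Rightarrow> 'n \<Rightarrow> complex^'n"
  assumes Theta: "open \<Theta>" "is_interval \<Theta>"
    and psi0_norm: "cinner psi0 psi0 = 1"
    and Y_deriv: "\<And>\<theta> k. \<theta> \<in> \<Theta> \<Longrightarrow> ((\<lambda>t. Y t k) has_vector_derivative Y' \<theta> k) (at \<theta>)"
    and Y_complete: "\<And>\<theta>. \<theta> \<in> \<Theta> \<Longrightarrow> (\<Sum>k\<in>UNIV. mat_adj (Y \<theta> k) ** Y \<theta> k) = mat 1"
    and Y_canonical: "\<And>\<theta> j k. \<theta> \<in> \<Theta> \<Longrightarrow>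
        trace (Y \<theta> k ** ket_bra psi0 psi0 ** mat_adj (Y \<theta> j)) = (if j = k then complex_of_real (p \<theta> k) else 0)"
    and Y_w: "\<And>\<theta> k. \<theta> \<in> \<Theta> \<Longrightarrow> Y \<theta> k *v psi0 = complex_of_real (sqrt (p \<theta> k)) *s w \<theta> k"
    and w_orth: "\<And>\<theta> j k. \<theta> \<in> \<Theta> \<Longrightarrow> cinner (w \<theta> j) (w \<theta> k) = (if j = k then 1 else 0)"
    and w_deriv: "\<And>\<theta> k. \<theta> \<in> \<Theta> \<Longrightarrow> ((\<lambda>t. w t k) has_vector_derivative w' \<theta> k) (at \<theta>)"
    and p_dich: "\<And>k. (\<forall>\<theta>\<in>\<Theta>. p \<theta> k = 0) \<or> (\<forall>\<theta>\<in>\<Theta>. p \<theta> k > 0)"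
  shows "\<forall>\<theta>\<in>\<Theta>.
           (\<forall>N M. is_povm N M \<longrightarrow> fisher_info Y psi0 N M \<theta> \<le> C_Ups (Y' \<theta>) psi0) \<and>
           ((\<exists>N M. is_povm N M \<and> fisher_info Y psi0 N M \<theta> = C_Ups (Y' \<theta>) psi0) \<longleftrightarrow>
            (\<forall>j k. p \<theta> j > 0 \<and> p \<theta> k > 0 \<longrightarrow> cinner (w' \<theta> j) (w \<theta> k) = 0))"
proof (intro ballI)
  fix \<theta> assume th: "\<theta> \<in> \<Theta>"
  define a where "a k = Y \<theta> k *v psi0" for k
  define b where "b k = Y' \<theta> k *v psi0" for k
  define S where "S = {k. p \<theta> k > 0}"
  have bl1: "bounded_linear (\<lambda>A::complex^'n^'n. A *v psi0)"
    using linear_mv_left linear_conv_bounded_linear by blast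
  have da: "((\<lambda>t. Y t k *v psi0) has_vector_derivative b k) (at \<theta>)" for k
    unfolding b_def by (rule bounded_linear.has_vector_derivative[OF bl1 Y_deriv[OF th]])
  have fish: "fisher_info Y psi0 N M \<theta> = (\<Sum>m\<in>{m. m < N \<and> QA (M m) a > 0}. (2 * QB (M m) a b)^2 / QA (M m) a)"
    if P: "is_povm N M" for N M
    unfolding fisher_info_def
  proof (rule sum.cong)
    show "{m. m < N \<and> outcome_prob Y psi0 M m \<theta> > 0} = {m. m < N \<and> QA (M m) a > 0}"
      by (simp add: outcome_prob_eq a_def[abs_def])
  next
    fix m assume "m \<in> {m. m < N \<and> QA (M m) a > 0}"
    then have pm: "psd (M m)" using P unfolding is_povm_def by auto
    show "(deriv (outcome_prob Y psi0 M m) \<theta>)^2 / outcome_prob Y psi0 M m \<theta> = (2 * QB (M m) a b)^2 / QA (M m) a"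
      using outcome_deriv[of Y "Y' \<theta>" \<theta> M m psi0, OF Y_deriv[OF th] pm] by (simp add: outcome_prob_eq a_def[abs_def] b_def[abs_def])
  qed
  have C: "C_Ups (Y' \<theta>) psi0 = 4 * (\<Sum>k\<in>UNIV. b k \<bullet> b k)" by (simp add: C_Ups_eq b_def[abs_def])
  have part1: "\<forall>N M. is_povm N M \<longrightarrow> fisher_info Y psi0 N M \<theta> \<le> C_Ups (Y' \<theta>) psi0"
  proof (intro allI impI)
    fix N and M :: "nat \<Rightarrow> complex^'n^'n" assume P: "is_povm N M"
    show "fisher_info Y psi0 N M \<theta> \<le> C_Ups (Y' \<theta>) psi0"
      using fisher_abs(1)[OF P, where a=a and b=b] unfolding fish[OF P] C .
  qed
  have iffF: "(\<exists>N M. is_povm N M \<and> fisher_info Y psi0 N M \<theta> = C_Ups (Y' \<theta>) psi0)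
      \<longleftrightarrow> (\<exists>N M. is_povm N M \<and> (\<forall>m<N. \<exists>s::real. \<forall>k. M m *v b k = s *\<^sub>R (M m *v a k)))"
  proof -
    have "is_povm N M \<Longrightarrow> (fisher_info Y psi0 N M \<theta> = C_Ups (Y' \<theta>) psi0
      \<longleftrightarrow> (\<forall>m<N. \<exists>s::real. \<forall>k. M m *v b k = s *\<^sub>R (M m *v a k)))" for N and M :: "nat \<Rightarrow> complex^'n^'n"
      using fisher_abs(2)[where a=a and b=b and N=N and M=M] unfolding fish C by simp
    then show ?thesis by blast
  qed
  have pS: "p t k > 0" if "k \<in> S" "t \<in> \<Theta>" for k t
    using p_dich[of k] th that by (auto simp: S_def)
  have pZ: "p t k = 0" if "k \<notin> S" "t \<in> \<Theta>" for k t
    using p_dich[of k] th that by (auto simp: S_def)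
  have aZ: "a k = 0" if "k \<notin> S" for k
    using pZ[OF that th] Y_w[OF th, of k] by (simp add: a_def)
  have bZ: "b k = 0" if "k \<notin> S" for k
    by (rule deriv_zero_on[OF da Theta(1) th]) (use pZ[OF that] Y_w in simp)
  define sq where "sq k = sqrt (p \<theta> k)" for k
  have sqpos: "sq k > 0" if "k \<in> S" for k using pS[OF that th] by (simp add: sq_def)
  have aw: "a k = complex_of_real (sq k) *s w \<theta> k" for k by (simp add: a_def sq_def Y_w[OF th])
  have F1: "(j \<noteq> k \<longrightarrow> cinner (w' \<theta> j) (a k) + cinner (w \<theta> j) (b k) = 0)
      \<and> Im (cinner (w' \<theta> j) (a k) + cinner (w \<theta> j) (b k)) = 0" for j k
  proof -
    have hd: "((\<lambda>t. cinner (w t j) (Y t k *v psi0)) has_vector_derivative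
        (cinner (w' \<theta> j) (a k) + cinner (w \<theta> j) (b k))) (at \<theta>)"
      using cinner_deriv[OF w_deriv[OF th] da] by (simp add: a_def)
    have gt: "cinner (w t j) (Y t k *v psi0) = complex_of_real (sqrt (p t k)) * (if j = k then 1 else 0)"
      if "t \<in> \<Theta>" for t
      using that by (simp add: Y_w cinner_scale_right w_orth)
    show ?thesis
    proof
      show "j \<noteq> k \<longrightarrow> cinner (w' \<theta> j) (a k) + cinner (w \<theta> j) (b k) = 0"
        using deriv_zero_on[OF hd Theta(1) th] gt by simp
      show "Im (cinner (w' \<theta> j) (a k) + cinner (w \<theta> j) (b k)) = 0"
        using deriv_real_on[OF hd Theta(1) th] gt by simp
    qed
  qed
  have F2: "(j \<noteq> k \<longrightarrow> cinner (b j) (a k) + cinner (a j) (b k) = 0)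
      \<and> Im (cinner (b j) (a k) + cinner (a j) (b k)) = 0" for j k
  proof -
    have hd: "((\<lambda>t. cinner (Y t j *v psi0) (Y t k *v psi0)) has_vector_derivative
        (cinner (b j) (a k) + cinner (a j) (b k))) (at \<theta>)"
      using cinner_deriv[OF da da] by (simp add: a_def)
    have gt: "cinner (Y t j *v psi0) (Y t k *v psi0)
        = complex_of_real (sqrt (p t j)) * (complex_of_real (sqrt (p t k)) * (if j = k then 1 else 0))"
      if "t \<in> \<Theta>" for t
      using that by (simp add: Y_w cinner_scale_right cinner_real_scale w_orth)
    show ?thesis
    proof
      show "j \<noteq> k \<longrightarrow> cinner (b j) (a k) + cinner (a j) (b k) = 0"
        using deriv_zero_on[OF hd Theta(1) th] gt by simp
      show "Im (cinner (b j) (a k) + cinner (a j) (b k)) = 0"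
        using deriv_real_on[OF hd Theta(1) th] gt by simp
    qed
  qed
  have F3: "cinner (w' \<theta> k) (w \<theta> k) + cinner (w \<theta> k) (w' \<theta> k) = 0" for k
  proof -
    have hd: "((\<lambda>t. cinner (w t k) (w t k) - 1) has_vector_derivative
        (cinner (w' \<theta> k) (w \<theta> k) + cinner (w \<theta> k) (w' \<theta> k) - 0)) (at \<theta>)"
      by (intro has_vector_derivative_diff cinner_deriv w_deriv[OF th] has_vector_derivative_const)
    show ?thesis using deriv_zero_on[OF hd Theta(1) th] w_orth by simp
  qed
  have F1': "cinner (w' \<theta> j) (a k) = complex_of_real (sq k) * cinner (w' \<theta> j) (w \<theta> k)" for j k
    by (simp add: aw cinner_scale_right)
  have ab: "cinner (a j) (b k) = complex_of_real (sq j) * cinner (w \<theta> j) (b k)" for j k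
    by (simp add: aw cinner_real_scale)
  have part2: "(\<exists>N M. is_povm N M \<and> (\<forall>m<N. \<exists>s::real. \<forall>k. M m *v b k = s *\<^sub>R (M m *v a k)))
      \<longleftrightarrow> (\<forall>j k. p \<theta> j > 0 \<and> p \<theta> k > 0 \<longrightarrow> cinner (w' \<theta> j) (w \<theta> k) = 0)"
  proof
    assume "\<exists>N M. is_povm N M \<and> (\<forall>m<N. \<exists>s::real. \<forall>k. M m *v b k = s *\<^sub>R (M m *v a k))"
    then obtain N M where P: "is_povm N M" and E: "\<forall>m<N. \<exists>s::real. \<forall>k. M m *v b k = s *\<^sub>R (M m *v a k)"
      by blast
    obtain s where s: "\<And>m k. m < N \<Longrightarrow> M m *v b k = s m *\<^sub>R (M m *v a k)"
      using E by metis
    define L where "L = (\<Sum>m<N. s m *\<^sub>R M m)"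
    have hL: "mat_adj L = L" unfolding L_def using P
      by (simp add: mat_adj_sum mat_adj_scaleR is_povm_def psd_def hermitian_def)
    have La: "L *v a k = b k" for k
    proof -
      have "L *v a k = (\<Sum>m<N. M m *v b k)" unfolding L_def
        by (simp add: sum_matrix_vec scaleR_mv s)
      also have "\<dots> = b k" using P by (simp add: sum_matrix_vec[symmetric] is_povm_def)
      finally show ?thesis .
    qed
    have ba: "cinner (b j) (a k) = cinner (a j) (b k)" for j k
      using cinner_adj[of "a j" L "a k"] hL La by simp
    have Z: "(j \<noteq> k \<longrightarrow> cinner (w \<theta> j) (b k) = 0) \<and> Im (cinner (w \<theta> j) (b k)) = 0"
      if "j \<in> S" for j k
    proof -
      have "(j \<noteq> k \<longrightarrow> cinner (a j) (b k) = 0) \<and> Im (cinner (a j) (b k)) = 0"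
        using F2[of j k] by (simp add: ba)
      then show ?thesis using sqpos[OF that] by (simp add: ab)
    qed
    show "\<forall>j k. p \<theta> j > 0 \<and> p \<theta> k > 0 \<longrightarrow> cinner (w' \<theta> j) (w \<theta> k) = 0"
    proof (intro allI impI)
      fix j k assume "p \<theta> j > 0 \<and> p \<theta> k > 0"
      then have jS: "j \<in> S" and kS: "k \<in> S" by (auto simp: S_def)
      define X where "X = cinner (w' \<theta> j) (w \<theta> k)"
      show "X = 0"
      proof (cases "j = k")
        case False
        then show ?thesis using F1[of j k] Z[OF jS, of k] sqpos[OF kS] by (simp add: F1' X_def)
      next
        case True
        have "Im X = 0" using F1[of j k] Z[OF jS, of k] sqpos[OF kS] by (simp add: F1' X_def)
        moreover have "Re X = 0"
        proof -
          have "cinner (w \<theta> k) (w' \<theta> k) = cnj X" unfolding X_def True by (rule cinner_cnj)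
          then show ?thesis using F3[of k] unfolding X_def True by (simp add: complex_eq_iff)
        qed
        ultimately show ?thesis by (simp add: complex_eq_iff)
      qed
    qed
  next
    assume cond: "\<forall>j k. p \<theta> j > 0 \<and> p \<theta> k > 0 \<longrightarrow> cinner (w' \<theta> j) (w \<theta> k) = 0"
    have Z: "(j \<noteq> k \<longrightarrow> cinner (w \<theta> j) (b k) = 0) \<and> Im (cinner (w \<theta> j) (b k)) = 0"
      if "j \<in> S" "k \<in> S" for j k
      using F1[of j k] cond that by (simp add: F1' S_def)
    define c where "c k = complex_of_real (1 / sq k) *s b k" for k
    have sym: "cinner (w \<theta> j) (c k) = cinner (c j) (w \<theta> k)" if "j \<in> S" "k \<in> S" for j k
    proof -
      have r: "cinner (c j) (w \<theta> k) = cnj (cinner (w \<theta> k) (c j))" by (rule cinner_cnj)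
      show ?thesis
      proof (cases "j = k")
        case True
        have "cnj (cinner (w \<theta> k) (b k)) = cinner (w \<theta> k) (b k)"
          using Z[OF that(2) that(2)] by (simp add: complex_eq_iff)
        then show ?thesis using True r by (simp add: c_def cinner_scale_right)
      next
        case False
        then show ?thesis using r Z[OF that] Z[OF that(2,1)] by (simp add: c_def cinner_scale_right)
      qed
    qed
    obtain L where hL: "hermitian L" and Lw: "\<forall>k\<in>S. L *v w \<theta> k = c k"
      using herm_ext[OF w_orth[OF th] sym] by blast
    have La: "L *v a k = b k" for k
    proof (cases "k \<in> S")
      case True
      have "L *v a k = complex_of_real (sq k) *s c k" using Lw True by (simp add: aw mv_smult)
      also have "\<dots> = b k" using sqpos[OF True] by (simp add: c_def vector_smult_assoc)
      finally show ?thesis .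
    next
      case False
      then show ?thesis by (simp add: aZ bZ)
    qed
    obtain N M where P: "is_povm N M" and E: "\<forall>m<N. \<exists>s::real. \<forall>x. M m *v (L *v x) = s *\<^sub>R (M m *v x)"
      using povm_from_herm[OF hL] by blast
    have "\<forall>m<N. \<exists>s::real. \<forall>k. M m *v b k = s *\<^sub>R (M m *v a k)"
      using E by (metis La)
    then show "\<exists>N M. is_povm N M \<and> (\<forall>m<N. \<exists>s::real. \<forall>k. M m *v b k = s *\<^sub>R (M m *v a k))"
      using P by blast
  qed
  show "(\<forall>N M. is_povm N M \<longrightarrow> fisher_info Y psi0 N M \<theta> \<le> C_Ups (Y' \<theta>) psi0) \<and>
           ((\<exists>N M. is_povm N M \<and> fisher_info Y psi0 N M \<theta> = C_Ups (Y' \<theta>) psi0) \<longleftrightarrow>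
            (\<forall>j k. p \<theta> j > 0 \<and> p \<theta> k > 0 \<longrightarrow> cinner (w' \<theta> j) (w \<theta> k) = 0))"
    using part1 iffF part2 by blast
qed

end
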